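(* Let $\ell>0$ and let $B\subset\mathbb R^d$ be a closed Euclidean ball of radius at least $3\ell d^2$ with $0\in\partial B$. Then there exists $z\in I$ such that $K_\ell(z)$ is contained in the interior of $B$.
   Context: $I:=\{z\in\mathbb Z^d:|z|_\infty=d\}$, where $|\cdot|_\infty$ is the sup norm; $K_\ell(z):=z\ell+[-\ell/2,\ell/2]^d$. *)

theory Defs
  imports "HOL-Analysis.Analysis"
begin

definition I_set :: "(real ^ 'n) set" where
  "I_set = {z. (\<forall>i. z $ i \<in> \<int>) \<and> infnorm z = real CARD('n)}"

definition K_cube :: "real \<Rightarrow> real ^ 'n \<Rightarrow> (real ^ 'n) set" where
  "K_cube l z = (\<lambda>y. l *\<^sub>R z + y) ` {y. \<forall>i. - l / 2 \<le> y $ i \<and> y $ i \<le> l / 2}"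

end

theory Submission
  imports Defs
begin

theorem lemma9p2:
  fixes l r :: real and c :: "real ^ 'n"
  assumes "l > 0"
    and "r \<ge> 3 * l * (real CARD('n))^2"
    and "0 \<in> frontier (cball c r)"
  shows "\<exists>z \<in> I_set. K_cube l z \<subseteq> interior (cball c r)"
proof -
  define d where "d = real CARD('n)"
  have d1: "d \<ge> 1" unfolding d_def by simp
  have nc: "norm c = r" using assms(3) by (simp add: dist_norm)
  have rpos: "r > 0" using assms(1,2) d1 unfolding d_def[symmetric]
    by (smt (verit) mult_pos_pos zero_less_power)
  define m where "m = infnorm c"
  have cne: "c \<noteq> 0" using nc rpos by auto
  have mpos: "m > 0" using cne infnorm_pos_lt m_def by blast
  have mr: "m \<le> r" using infnorm_le_norm[of c] nc m_def by simp
  have "r \<le> sqrt d * m" using norm_le_infnorm[of c] nc m_def d_def by simp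
  moreover have "sqrt d \<le> d"
  proof -
    have "d \<le> d^2" using d1 by (simp add: power2_eq_square)
    hence "sqrt d \<le> sqrt (d^2)" by (rule real_sqrt_le_mono)
    thus ?thesis using d1 by simp
  qed
  ultimately have "r \<le> d * m" using mpos mult_right_mono[of "sqrt d" d m] by linarith
  hence "3 * l * d^2 \<le> d * m" using assms(2) d_def by simp
  hence "d * (3 * l * d) \<le> d * m" by (simp add: power2_eq_square algebra_simps)
  hence "3 * l * d \<le> m" using d1 by simp
  hence ldm: "l * d \<le> m" using d1 assms(1) mult_pos_pos[of l d] by linarith
  have "m = Sup {\<bar>c$i\<bar> |i. i\<in>UNIV}" using infnorm_cart m_def by simp
  also have "{\<bar>c$i\<bar> |i. i\<in>UNIV} = (\<lambda>i. \<bar>c$i\<bar>) ` UNIV" by auto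
  finally have "m = Max ((\<lambda>i. \<bar>c$i\<bar>) ` UNIV)"
    by (simp add: cSup_eq_Max)
  hence "m \<in> (\<lambda>i. \<bar>c$i\<bar>) ` UNIV" by (metis Max_in finite finite_imageI image_is_empty UNIV_not_empty)
  then obtain j where j: "\<bar>c$j\<bar> = m" by auto
  have cm: "\<bar>c$i\<bar> \<le> m" for i using component_le_infnorm_cart m_def by simp
  define z :: "real^'n" where "z = (\<chi> i. of_int (round (d * c$i / m)))"
  have zerr: "\<bar>z$i - d * c$i / m\<bar> \<le> 1/2" for i
    unfolding z_def using of_int_round_abs_le by (simp add: abs_minus_commute)
  have zj: "z$j = d * c$j / m"
  proof -
    have "d * c$j / m = d \<or> d * c$j / m = - d" using j mpos by (auto simp: abs_if)
    moreover have "round (- real CARD('n)) = - int CARD('n)"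
      by (metis of_int_minus of_int_of_nat_eq round_of_int)
    ultimately show ?thesis unfolding z_def d_def by auto
  qed
  have zint: "\<forall>i. z $ i \<in> \<int>" unfolding z_def by simp
  have zle: "\<bar>z$i\<bar> \<le> d" for i
  proof -
    have "\<bar>d * c$i / m\<bar> \<le> d" using cm[of i] mpos d1
      by (simp add: abs_mult divide_le_eq mult_left_mono)
    hence a: "-d \<le> d * c$i / m" "d * c$i / m \<le> d" by (simp_all only: abs_le_iff, linarith+)
    have "round (-d) \<le> round (d * c$i / m)" "round (d * c$i / m) \<le> round d"
      using round_mono a by auto
    moreover have "round d = int CARD('n)" "round (-d) = - int CARD('n)" unfolding d_def
      by (metis of_int_of_nat_eq round_of_int, metis of_int_minus of_int_of_nat_eq round_of_int)
    ultimately show ?thesis unfolding z_def d_def by auto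
  qed
  have "infnorm z = d"
  proof (rule antisym)
    have "Sup {\<bar>z$i\<bar> |i. i\<in>UNIV} \<le> d"
    proof (rule cSup_least)
      show "{\<bar>z$i\<bar> |i. i\<in>UNIV} \<noteq> {}" by blast
      fix x assume "x \<in> {\<bar>z$i\<bar> |i. i\<in>UNIV}"
      then obtain i where "x = \<bar>z$i\<bar>" by blast
      thus "x \<le> d" using zle[of i] by simp
    qed
    thus "infnorm z \<le> d" by (simp only: infnorm_cart)
    have "\<bar>z$j\<bar> = d" using zj j mpos d1 by (simp add: abs_mult)
    thus "d \<le> infnorm z" using component_le_infnorm_cart[of z j] by simp
  qed
  hence zI: "z \<in> I_set" unfolding I_set_def d_def using zint by simp
  have "K_cube l z \<subseteq> ball c r"
  proof
    fix p assume "p \<in> K_cube l z"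
    then obtain y where y: "\<forall>i. - l / 2 \<le> y $ i \<and> y $ i \<le> l / 2" and p: "p = l *\<^sub>R z + y"
      unfolding K_cube_def by auto
    define s where "s = l * d / m"
    define w where "w = p - s *\<^sub>R c"
    have wi: "w$i = l * (z$i - d * c$i / m) + y$i" for i
      unfolding w_def p s_def by (simp add: algebra_simps)
    have wb: "\<bar>w$i\<bar> \<le> l" for i
    proof -
      have A: "\<bar>l * (z$i - d * c$i / m)\<bar> \<le> l/2" using zerr[of i] assms(1)
        by (simp add: abs_mult)
      moreover have "- l / 2 \<le> y $ i" "y $ i \<le> l / 2" using y by auto
      ultimately have "\<bar>y $ i\<bar> \<le> l / 2" by (simp add: abs_le_iff)
      moreover have "\<bar>w$i\<bar> \<le> \<bar>l * (z$i - d * c$i / m)\<bar> + \<bar>y$i\<bar>"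
        unfolding wi[of i] by (rule abs_triangle_ineq)
      ultimately show ?thesis using A by linarith
    qed
    have wj: "\<bar>w$j\<bar> < l"
    proof -
      have "w$j = y$j" using wi[of j] zj by simp
      moreover have "- l / 2 \<le> y $ j" "y $ j \<le> l / 2" using y by auto
      ultimately have "\<bar>y $ j\<bar> \<le> l / 2" by (simp add: abs_le_iff)
      thus ?thesis using assms(1) \<open>w$j = y$j\<close> by linarith
    qed
    have "norm w \<le> (\<Sum>i\<in>UNIV. \<bar>w$i\<bar>)" by (rule norm_le_l1_cart)
    also have "\<dots> < (\<Sum>i\<in>(UNIV::'n set). l)"
    proof (rule sum_strict_mono_ex1[of UNIV "\<lambda>i. \<bar>w$i\<bar>" "\<lambda>i. l"])
      show "finite (UNIV :: 'n set)" by simp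
      show "\<forall>x\<in>UNIV. \<bar>w $ x\<bar> \<le> l" using wb by blast
      show "\<exists>a\<in>UNIV. \<bar>w $ a\<bar> < l" using wj by blast
    qed
    also have "\<dots> = l * d" unfolding d_def by simp
    finally have nw: "norm w < l * d" .
    have s1: "s \<le> 1" unfolding s_def using ldm mpos by simp
    have s0: "s \<ge> 0" unfolding s_def using assms(1) d1 mpos by simp
    have "p - c = w - (1 - s) *\<^sub>R c" unfolding w_def by (simp add: algebra_simps)
    hence "norm (p - c) \<le> norm w + (1 - s) * r"
      using norm_triangle_ineq4[of w "(1 - s) *\<^sub>R c"] s1 nc by simp
    also have "(1 - s) * r = r - l * d * (r / m)" unfolding s_def using mpos by (simp add: field_simps)
    also have "r / m \<ge> 1" using mr mpos by simp
    hence "l * d * (r / m) \<ge> l * d * 1" using assms(1) d1 by (intro mult_left_mono) auto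
    hence "norm w + (r - l * d * (r / m)) < r" using nw by linarith
    finally show "p \<in> ball c r" by (simp add: dist_norm norm_minus_commute)
  qed
  thus ?thesis using zI by auto
qed

end
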